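(* Let $I$ be an open interval of $\mathbb R$, and for each positive integer $n$ let $V_n$ be the set of all complex-valued functions $f$ on $I$ having $n$ continuous derivatives and satisfying $f^{(n)}=f$ (equivalently, $V_n$ is spanned by $e^{t},e^{\omega t},\dots,e^{\omega^{n-1}t}$ where $\omega$ is a primitive $n$-th root of unity). Let $\mathcal V=\{V_n\mid n\in\mathbb Z^{+}\}$, partially ordered by $V_k\leqslant V_n$ if and only if $k$ divides $n$ (equivalently, $V_k$ is a subspace of $V_n$). Regarding $(\mathcal V,\leqslant)$ and $\mathbb Z^{+}_D$ as categories, they are equivalent.
   Context: $\mathbb Z^{+}_D$ denotes the positive integers partially ordered by divisibility ($k\leqslant n$ iff $n=kt$ for some positive integer $t$). A partially ordered set is regarded as a category with one arrow $x\to y$ exactly when $x\leqslant y$. *)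

theory Defs
  imports "HOL-Analysis.Analysis"
begin

text \<open>V_n on an interval I: complex-valued functions on I (represented as total
functions that vanish outside I) having n continuous derivatives on I,
with f^(n) = f on I.\<close>

definition Vsp :: "real set \<Rightarrow> nat \<Rightarrow> (real \<Rightarrow> complex) set" where
  "Vsp I n = {f. (\<forall>t. t \<notin> I \<longrightarrow> f t = 0) \<and>
     (\<exists>ds :: nat \<Rightarrow> real \<Rightarrow> complex. ds 0 = f \<and>
        (\<forall>k<n. \<forall>t\<in>I. (ds k has_vector_derivative ds (Suc k) t) (at t)) \<and>
        continuous_on I (ds n) \<and>
        (\<forall>t\<in>I. ds n t = f t))}"

definition Vfam :: "real set \<Rightarrow> (real \<Rightarrow> complex) set set" where
  "Vfam I = {Vsp I n | n. n > 0}"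

definition Vle :: "real set \<Rightarrow> (real \<Rightarrow> complex) set \<Rightarrow> (real \<Rightarrow> complex) set \<Rightarrow> bool" where
  "Vle I A B = (\<exists>k n. k > 0 \<and> n > 0 \<and> A = Vsp I k \<and> B = Vsp I n \<and> k dvd n)"

text \<open>Posets (A, le) regarded as thin categories: a functor is a monotone map
between carriers; a natural isomorphism between two functors into a thin
category is a family of isomorphisms F x \<rightarrow> G x (naturality is automatic);
an equivalence is a pair of functors whose composites are naturally
isomorphic to the identities.\<close>

definition poset_functor :: "'a set \<Rightarrow> ('a \<Rightarrow> 'a \<Rightarrow> bool) \<Rightarrow> 'b set \<Rightarrow> ('b \<Rightarrow> 'b \<Rightarrow> bool) \<Rightarrow> ('a \<Rightarrow> 'b) \<Rightarrow> bool" where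
  "poset_functor A leA B leB F =
     ((\<forall>x\<in>A. F x \<in> B) \<and> (\<forall>x\<in>A. \<forall>y\<in>A. leA x y \<longrightarrow> leB (F x) (F y)))"

definition poset_nat_iso :: "'a set \<Rightarrow> ('b \<Rightarrow> 'b \<Rightarrow> bool) \<Rightarrow> ('a \<Rightarrow> 'b) \<Rightarrow> ('a \<Rightarrow> 'b) \<Rightarrow> bool" where
  "poset_nat_iso A leB F G = (\<forall>x\<in>A. leB (F x) (G x) \<and> leB (G x) (F x))"

definition poset_cat_equivalent :: "'a set \<Rightarrow> ('a \<Rightarrow> 'a \<Rightarrow> bool) \<Rightarrow> 'b set \<Rightarrow> ('b \<Rightarrow> 'b \<Rightarrow> bool) \<Rightarrow> bool" where
  "poset_cat_equivalent A leA B leB =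
     (\<exists>F G. poset_functor A leA B leB F \<and> poset_functor B leB A leA G \<and>
        poset_nat_iso A leA (G \<circ> F) id \<and> poset_nat_iso B leB (F \<circ> G) id)"

end

theory Submission
  imports Defs
begin

lemma dexp: "((\<lambda>t. exp (w * complex_of_real t)) has_vector_derivative (w * exp (w * complex_of_real t))) (at t)"
  by (metis (no_types, lifting) ext exp_scaleR_has_vector_derivative_right
    mult_commute_abs scaleR_conv_of_real)

lemma root_dvd: assumes "n>0" "exp (2*pi*\<i>/n) ^ m = 1" shows "n dvd (m::nat)"
proof -
  have "exp (of_nat m * (2*pi*\<i>/n)) = exp (2*pi*\<i>/n) ^ m" by (rule exp_of_nat_mult)
  hence "exp (of_nat m * (2*pi*\<i>/n)) = 1" using assms(2) by simp
  then obtain k :: int where k: "Im (of_nat m * (2*pi*\<i>/n)) = of_int (2*k) * pi"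
    by (auto simp: exp_eq_1)
  hence "real m * (2 * pi) / real n = 2 * real_of_int k * pi" by simp
  hence "2*pi*real m / real n = 2 * real_of_int k * pi" by (simp add: mult.commute)
  hence "real m = real n * real_of_int k" using assms(1) by (simp add: field_simps)
  hence "int m = int n * k" by (metis of_int_eq_iff of_int_mult of_int_of_nat_eq)
  thus ?thesis by (metis dvd_triv_left int_dvd_int_iff)
qed

definition fI :: "real set \<Rightarrow> complex \<Rightarrow> real \<Rightarrow> complex" where
  "fI I w t = (if t \<in> I then exp (w * complex_of_real t) else 0)"

lemma deriv_on_I:
  assumes "open I" "t \<in> I"
  shows "((\<lambda>t. if t \<in> I then c * exp (w * complex_of_real t) else 0) has_vector_derivative
     (c * (w * exp (w * complex_of_real t)))) (at t)"
proof -
  have "((\<lambda>t. c * exp (w * complex_of_real t)) has_vector_derivative (c * (w * exp (w * complex_of_real t)))) (at t)"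
    using has_vector_derivative_mult_right[OF dexp] by simp
  thus ?thesis
    by (rule has_vector_derivative_transform_within_open[OF _ assms(1) assms(2)]) simp
qed

lemma fI_in:
  assumes "open I" "w ^ n = 1"
  shows "fI I w \<in> Vsp I n"
proof -
  define ds where "ds k = (if k = 0 then fI I w else (\<lambda>t. if t \<in> I then w^k * exp (w * complex_of_real t) else 0))" for k :: nat
  have ds: "ds k = (\<lambda>t. if t \<in> I then w^k * exp (w * complex_of_real t) else 0)" for k
    by (cases "k = 0") (auto simp: ds_def fI_def)
  have "\<forall>k<n. \<forall>t\<in>I. (ds k has_vector_derivative ds (Suc k) t) (at t)"
  proof (intro allI impI ballI)
    fix k t assume "k < n" "t \<in> I"
    have "ds (Suc k) t = w^k * (w * exp (w * complex_of_real t))" using \<open>t \<in> I\<close> by (simp add: ds mult_ac)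
    thus "(ds k has_vector_derivative ds (Suc k) t) (at t)"
      unfolding ds using deriv_on_I[OF assms(1) \<open>t \<in> I\<close>, of "w^k" w] by (simp add: ds)
  qed
  moreover have "continuous_on I (ds n)"
  proof -
    have "continuous_on I (\<lambda>t. w^n * exp (w * complex_of_real t))"
      by (intro continuous_intros)
    thus ?thesis by (rule continuous_on_eq) (auto simp: ds)
  qed
  moreover have "\<forall>t\<in>I. ds n t = fI I w t" using assms(2) by (simp add: ds fI_def)
  ultimately show ?thesis unfolding Vsp_def by (auto simp: fI_def ds_def intro!: exI[of _ ds])
qed

lemma fI_in_imp:
  assumes "open I" "I \<noteq> {}" "fI I w \<in> Vsp I m"
  shows "w ^ m = 1"
proof -
  obtain ds where d0: "ds 0 = fI I w"
    and dd: "\<forall>k<m. \<forall>t\<in>I. (ds k has_vector_derivative ds (Suc k) t) (at t)"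
    and dm: "\<forall>t\<in>I. ds m t = fI I w t"
    using assms(3) unfolding Vsp_def by blast
  have "\<forall>t\<in>I. ds k t = w^k * exp (w * complex_of_real t)" if "k \<le> m" for k
    using that
  proof (induction k)
    case 0 thus ?case using d0 by (simp add: fI_def)
  next
    case (Suc k)
    show ?case
    proof
      fix t assume t: "t \<in> I"
      have h1: "(ds k has_vector_derivative ds (Suc k) t) (at t)" using dd Suc.prems t by auto
      have "((\<lambda>t. w^k * exp (w * complex_of_real t)) has_vector_derivative (w^k * (w * exp (w * complex_of_real t)))) (at t)"
        using has_vector_derivative_mult_right[OF dexp] by simp
      hence h2: "(ds k has_vector_derivative (w^k * (w * exp (w * complex_of_real t)))) (at t)"
        by (rule has_vector_derivative_transform_within_open[OF _ assms(1) t]) (use Suc in auto)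
      have "ds (Suc k) t = w^k * (w * exp (w * complex_of_real t))"
        using vector_derivative_unique_at[OF h1 h2] .
      thus "ds (Suc k) t = w ^ Suc k * exp (w * complex_of_real t)" by (simp add: mult.assoc)
    qed
  qed
  moreover obtain t where t: "t \<in> I" using assms(2) by blast
  ultimately have "ds m t = w^m * exp (w * complex_of_real t)" by blast
  moreover have "ds m t = exp (w * complex_of_real t)" using dm t by (simp add: fI_def)
  ultimately have "w^m * exp (w * complex_of_real t) = exp (w * complex_of_real t)" by simp
  thus ?thesis by (metis exp_not_eq_zero mult_cancel_right2)
qed

lemma Vsp_inj:
  assumes "open I" "I \<noteq> {}" "m > 0" "n > 0" "Vsp I m = Vsp I n"
  shows "m = n"
proof -
  have A: "a dvd b" if "a > 0" "Vsp I a = Vsp I b" for a b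
  proof -
    have "fI I (exp (2*pi*\<i>/a)) \<in> Vsp I a"
    proof (rule fI_in[OF assms(1)])
      have "exp (2*pi*\<i>/a) ^ a = exp (of_nat a * (2*pi*\<i>/a))" by (rule exp_of_nat_mult[symmetric])
      also have "of_nat a * (2*pi*\<i>/a) = 2*pi*\<i>" using that(1) by simp
      finally show "exp (2*pi*\<i>/a) ^ a = 1" by simp
    qed
    hence "fI I (exp (2*pi*\<i>/a)) \<in> Vsp I b" using that by simp
    hence "exp (2*pi*\<i>/a) ^ b = 1" by (rule fI_in_imp[OF assms(1,2)])
    thus ?thesis by (rule root_dvd[OF that(1)])
  qed
  show ?thesis using A[OF assms(3,5)] A[OF assms(4) assms(5)[symmetric]] by (simp add: dvd_antisym)
qed

theorem mainTheorem5:
  fixes I :: "real set"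
  assumes "open I" and "is_interval I" and "I \<noteq> {}"
  shows "poset_cat_equivalent (Vfam I) (Vle I) {n :: nat. n > 0} (dvd)"
proof -
  define F where "F V = (SOME n. n > 0 \<and> V = Vsp I n)" for V
  have F: "F (Vsp I n) = n" if "n > 0" for n
  proof -
    have "F (Vsp I n) > 0 \<and> Vsp I n = Vsp I (F (Vsp I n))"
      unfolding F_def by (rule someI[of _ n]) (use that in auto)
    thus ?thesis using Vsp_inj[OF assms(1,3)] that by metis
  qed
  have "poset_functor (Vfam I) (Vle I) {n. n > 0} (dvd) F"
    unfolding poset_functor_def Vfam_def Vle_def using F by auto
  moreover have "poset_functor {n. n > 0} (dvd) (Vfam I) (Vle I) (Vsp I)"
    unfolding poset_functor_def Vfam_def Vle_def by auto
  moreover have "poset_nat_iso (Vfam I) (Vle I) (Vsp I \<circ> F) id"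
    unfolding poset_nat_iso_def Vfam_def Vle_def
  proof safe
    fix n :: nat assume "0 < n"
    thus "\<exists>k na. 0 < k \<and> 0 < na \<and> (Vsp I \<circ> F) (Vsp I n) = Vsp I k \<and> id (Vsp I n) = Vsp I na \<and> k dvd na"
      "\<exists>k na. 0 < k \<and> 0 < na \<and> id (Vsp I n) = Vsp I k \<and> (Vsp I \<circ> F) (Vsp I n) = Vsp I na \<and> k dvd na"
      using F \<open>0 < n\<close> by (auto intro!: exI[of _ n])
  qed
  moreover have "poset_nat_iso {n. n > 0} (dvd) (F \<circ> Vsp I) id"
    unfolding poset_nat_iso_def using F by auto
  ultimately show ?thesis unfolding poset_cat_equivalent_def by blast
qed

end
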